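(* Let $\Sigma^2\subset\mathbb{R}^2$ be open and let $\psi=(x,\phi):\Sigma^2\to\mathbb{R}^2\times\mathbb{R}$ be an indefinite improper affine sphere with Blaschke normal $\xi=(0,0,1)$, where $x:\Sigma^2\to\mathbb{R}^2$, $\phi:\Sigma^2\to\mathbb{R}$; write its conormal map as $\nu=(n,1)$ with $n:\Sigma^2\to\mathbb{R}^2$. Define $\tilde L_\psi:\Sigma^2\to\widetilde{\mathbb{C}}^2$ by $\tilde L_\psi:=x+jn$, and identify $\widetilde{\mathbb{C}}^2$ with $\mathbb{R}^4$ via $(z_1,z_2)=(y_0+jy_1,\,y_2+jy_3)\leftrightarrow(y_0,y_1,y_2,y_3)$. Then \[ \tilde L_\psi^*(dy_0\wedge dy_1+dy_2\wedge dy_3)=0\quad\text{and}\quad \tilde L_\psi^*(dy_0\wedge dy_2+dy_1\wedge dy_3)=0 . \]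
   Context: Para-complex numbers: $\widetilde{\mathbb{C}}=\{a+jb: a,b\in\mathbb{R}\}$ with $j^2=1$. An improper affine sphere is an immersion $\psi$ into affine $3$-space whose Blaschke (affine) normal $\xi$ has vanishing shape operator (hence is constant; here normalized to $\xi=(0,0,1)$); it is indefinite if its affine metric is indefinite. The conormal map $\nu$ is the map into $(\mathbb{R}^3)^*\cong\mathbb{R}^3$ with $\nu(d\psi)=0$ and $\nu(\xi)=1$, so $\nu=(n,1)$ for some $n:\Sigma^2\to\mathbb{R}^2$; the affine metric equals $-\langle dx,dn\rangle$. *)

theory Defs
  imports "HOL-Analysis.Analysis"
begin

type_synonym R2 = "real \<times> real"
type_synonym R3 = "(real \<times> real) \<times> real"

definition e1 :: R2 where "e1 = (1, 0)"
definition e2 :: R2 where "e2 = (0, 1)"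

definition pd :: "(R2 \<Rightarrow> 'b::real_normed_vector) \<Rightarrow> R2 \<Rightarrow> R2 \<Rightarrow> 'b" where
  "pd f p X = frechet_derivative f (at p) X"

definition pd2 :: "(R2 \<Rightarrow> 'b::real_normed_vector) \<Rightarrow> R2 \<Rightarrow> R2 \<Rightarrow> R2 \<Rightarrow> 'b" where
  "pd2 f p X Y = pd (\<lambda>q. pd f q Y) p X"

definition C2_on :: "R2 set \<Rightarrow> (R2 \<Rightarrow> 'b::real_normed_vector) \<Rightarrow> bool" where
  "C2_on S f \<longleftrightarrow>
     (\<forall>p\<in>S. f differentiable (at p)) \<and>
     (\<forall>Y. \<forall>p\<in>S. (\<lambda>q. pd f q Y) differentiable (at p)) \<and>
     (\<forall>X Y. continuous_on S (\<lambda>q. pd2 f q X Y))"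

definition immersion_on :: "R2 set \<Rightarrow> (R2 \<Rightarrow> R3) \<Rightarrow> bool" where
  "immersion_on S \<psi> \<longleftrightarrow> C2_on S \<psi> \<and> (\<forall>p\<in>S. inj (pd \<psi> p))"

definition det3 :: "R3 \<Rightarrow> R3 \<Rightarrow> R3 \<Rightarrow> real" where
  "det3 a b c =
     (let a1 = fst (fst a); a2 = snd (fst a); a3 = snd a;
          b1 = fst (fst b); b2 = snd (fst b); b3 = snd b;
          c1 = fst (fst c); c2 = snd (fst c); c3 = snd c
      in a1 * (b2 * c3 - b3 * c2) - a2 * (b1 * c3 - b3 * c1) + a3 * (b1 * c2 - b2 * c1))"

(* affine fundamental form h induced by a transversal field \<xi>:
   D_X \<psi>_* Y = \<psi>_*(\<nabla>_X Y) + h(X,Y) \<xi> *)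
definition affine_fundamental_form :: "(R2 \<Rightarrow> R3) \<Rightarrow> (R2 \<Rightarrow> R3) \<Rightarrow> R2 \<Rightarrow> R2 \<Rightarrow> R2 \<Rightarrow> real" where
  "affine_fundamental_form \<psi> \<xi> p X Y =
     (THE h. \<exists>T. pd2 \<psi> p X Y = pd \<psi> p T + h *\<^sub>R \<xi> p)"

definition det_h :: "(R2 \<Rightarrow> R3) \<Rightarrow> (R2 \<Rightarrow> R3) \<Rightarrow> R2 \<Rightarrow> real" where
  "det_h \<psi> \<xi> p =
     (let h = affine_fundamental_form \<psi> \<xi> p
      in h e1 e1 * h e2 e2 - h e1 e2 * h e2 e1)"

definition shape_operator :: "(R2 \<Rightarrow> R3) \<Rightarrow> (R2 \<Rightarrow> R3) \<Rightarrow> R2 \<Rightarrow> R2 \<Rightarrow> R2" where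
  "shape_operator \<psi> \<xi> p X = (THE T. pd \<xi> p X = - pd \<psi> p T)"

(* Blaschke (affine) normal: transversal, equiaffine (D\<xi> tangent),
   h nondegenerate and induced volume det(\<psi>_u,\<psi>_v,\<xi>) equals the volume of h (up to sign) *)
definition is_blaschke_normal :: "R2 set \<Rightarrow> (R2 \<Rightarrow> R3) \<Rightarrow> (R2 \<Rightarrow> R3) \<Rightarrow> bool" where
  "is_blaschke_normal S \<psi> \<xi> \<longleftrightarrow>
     (\<forall>p\<in>S. det3 (pd \<psi> p e1) (pd \<psi> p e2) (\<xi> p) \<noteq> 0) \<and>
     (\<forall>p\<in>S. \<xi> differentiable (at p)) \<and>
     (\<forall>p\<in>S. \<forall>X. \<exists>T. pd \<xi> p X = pd \<psi> p T) \<and>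
     (\<forall>p\<in>S. det_h \<psi> \<xi> p \<noteq> 0 \<and>
             (det3 (pd \<psi> p e1) (pd \<psi> p e2) (\<xi> p))\<^sup>2 = \<bar>det_h \<psi> \<xi> p\<bar>)"

definition improper_affine_sphere :: "R2 set \<Rightarrow> (R2 \<Rightarrow> R3) \<Rightarrow> (R2 \<Rightarrow> R3) \<Rightarrow> bool" where
  "improper_affine_sphere S \<psi> \<xi> \<longleftrightarrow>
     immersion_on S \<psi> \<and> is_blaschke_normal S \<psi> \<xi> \<and>
     (\<forall>p\<in>S. \<forall>X. shape_operator \<psi> \<xi> p X = 0)"

definition indefinite_affine_metric :: "R2 set \<Rightarrow> (R2 \<Rightarrow> R3) \<Rightarrow> (R2 \<Rightarrow> R3) \<Rightarrow> bool" where
  "indefinite_affine_metric S \<psi> \<xi> \<longleftrightarrow> (\<forall>p\<in>S. det_h \<psi> \<xi> p < 0)"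

(* conormal map \<nu> (covectors on R^3 identified with R^3 via the standard pairing) *)
definition is_conormal :: "R2 set \<Rightarrow> (R2 \<Rightarrow> R3) \<Rightarrow> (R2 \<Rightarrow> R3) \<Rightarrow> (R2 \<Rightarrow> R3) \<Rightarrow> bool" where
  "is_conormal S \<psi> \<xi> \<nu> \<longleftrightarrow>
     (\<forall>p\<in>S. (\<forall>X. \<nu> p \<bullet> pd \<psi> p X = 0) \<and> \<nu> p \<bullet> \<xi> p = 1)"

(* para-complex numbers a + j b (j^2 = 1) represented as pairs (a, b) *)
type_synonym paracomplex = "real \<times> real"

definition pc :: "real \<Rightarrow> real \<Rightarrow> paracomplex" where
  "pc a b = (a, b)"

definition L_tilde :: "(R2 \<Rightarrow> R2) \<Rightarrow> (R2 \<Rightarrow> R2) \<Rightarrow> R2 \<Rightarrow> paracomplex \<times> paracomplex" where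
  "L_tilde x n p = (pc (fst (x p)) (fst (n p)), pc (snd (x p)) (snd (n p)))"

definition ycoord :: "nat \<Rightarrow> paracomplex \<times> paracomplex \<Rightarrow> real" where
  "ycoord i z = (if i = 0 then fst (fst z) else if i = 1 then snd (fst z)
                 else if i = 2 then fst (snd z) else snd (snd z))"

definition dwedge :: "nat \<Rightarrow> nat \<Rightarrow> paracomplex \<times> paracomplex \<Rightarrow> paracomplex \<times> paracomplex \<Rightarrow> real" where
  "dwedge i k V W = ycoord i V * ycoord k W - ycoord k V * ycoord i W"

definition omega1 where "omega1 V W = dwedge 0 1 V W + dwedge 2 3 V W"
definition omega2 where "omega2 V W = dwedge 0 2 V W + dwedge 1 3 V W"

definition pullback2 ::
  "((paracomplex \<times> paracomplex) \<Rightarrow> (paracomplex \<times> paracomplex) \<Rightarrow> real)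
    \<Rightarrow> (R2 \<Rightarrow> paracomplex \<times> paracomplex) \<Rightarrow> R2 \<Rightarrow> R2 \<Rightarrow> R2 \<Rightarrow> real" where
  "pullback2 \<omega> f p X Y = \<omega> (pd f p X) (pd f p Y)"

end

theory Submission
  imports Defs
begin


lemma pd_eq: "pd f p = frechet_derivative f (at p)"
  by (rule ext) (simp add: pd_def)

lemma pd_works: "f differentiable (at p) \<Longrightarrow> (f has_derivative pd f p) (at p)"
  by (simp add: pd_eq frechet_derivative_works[symmetric])

lemma pd_unique: "(f has_derivative D) (at p) \<Longrightarrow> pd f p = D"
  by (metis pd_eq frechet_derivative_at)

lemma pd_linear: "f differentiable (at p) \<Longrightarrow> linear (pd f p)"
  using pd_works has_derivative_linear by blast

lemma pd_bl: "f differentiable (at p) \<Longrightarrow> bounded_linear (pd f p)"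
  using pd_works has_derivative_bounded_linear by blast

lemma pd2_works: "(\<lambda>q. pd f q Y) differentiable (at p) \<Longrightarrow>
   ((\<lambda>q. pd f q Y) has_derivative (\<lambda>X. pd2 f p X Y)) (at p)"
proof -
  assume a: "(\<lambda>q. pd f q Y) differentiable (at p)"
  have "(\<lambda>X. pd2 f p X Y) = pd (\<lambda>q. pd f q Y) p" by (rule ext) (simp add: pd2_def)
  then show ?thesis using pd_works[OF a] by simp
qed

lemma line_deriv:
  fixes g :: "R2 \<Rightarrow> real"
  assumes "g differentiable (at (a + s *\<^sub>R V))"
  shows "((\<lambda>s. g (a + s *\<^sub>R V)) has_field_derivative pd g (a + s *\<^sub>R V) V) (at s)"
proof -
  have l: "((\<lambda>s. a + s *\<^sub>R V) has_derivative (\<lambda>h. h *\<^sub>R V)) (at s)"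
    by (auto intro!: derivative_eq_intros)
  have "((\<lambda>s. g (a + s *\<^sub>R V)) has_derivative (\<lambda>h. pd g (a + s *\<^sub>R V) (h *\<^sub>R V))) (at s)"
    using has_derivative_compose[OF l pd_works[OF assms]] by (simp add: o_def)
  moreover have "(\<lambda>h. pd g (a + s *\<^sub>R V) (h *\<^sub>R V)) = (*) (pd g (a + s *\<^sub>R V) V)"
    using linear_scale[OF pd_linear[OF assms]] by (auto simp: fun_eq_iff)
  ultimately show ?thesis by (simp add: has_field_derivative_def)
qed

lemma in_ball_aux:
  fixes p X Y :: R2
  assumes "0 \<le> s" "s \<le> t" "0 \<le> u" "u \<le> t" "t * (norm X + norm Y) < r"
  shows "p + s *\<^sub>R X + u *\<^sub>R Y \<in> ball p r"
proof -
  have "norm (s *\<^sub>R X + u *\<^sub>R Y) \<le> s * norm X + u * norm Y"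
    using norm_triangle_ineq[of "s *\<^sub>R X" "u *\<^sub>R Y"] assms by simp
  also have "\<dots> \<le> t * norm X + t * norm Y"
    using assms by (intro add_mono mult_right_mono) auto
  finally have "norm (s *\<^sub>R X + u *\<^sub>R Y) < r" using assms(5) by (simp add: distrib_left)
  moreover have "norm (- (s *\<^sub>R X) - u *\<^sub>R Y) = norm (s *\<^sub>R X + u *\<^sub>R Y)"
    by (metis minus_add_distrib norm_minus_cancel diff_conv_add_uminus)
  ultimately show ?thesis by (simp add: dist_norm algebra_simps)
qed

lemma delta_lemma:
  fixes g :: "R2 \<Rightarrow> real"
  assumes S: "ball p r \<subseteq> S" and t: "0 < t" "t * (norm X + norm Y) < r"
    and d1: "\<forall>q\<in>S. g differentiable (at q)"
    and d2: "\<forall>Y. \<forall>q\<in>S. (\<lambda>q. pd g q Y) differentiable (at q)"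
  shows "\<exists>q\<in>ball p r. g (p + t *\<^sub>R X + t *\<^sub>R Y) - g (p + t *\<^sub>R X) - g (p + t *\<^sub>R Y) + g p
           = t\<^sup>2 * pd2 g q Y X"
proof -
  define k where "k s = g ((p + t *\<^sub>R Y) + s *\<^sub>R X) - g (p + s *\<^sub>R X)" for s
  define k' where "k' s = pd g ((p + t *\<^sub>R Y) + s *\<^sub>R X) X - pd g (p + s *\<^sub>R X) X" for s
  have "DERIV k s :> k' s" if "0 \<le> s" "s \<le> t" for s
  proof -
    have m1: "(p + t *\<^sub>R Y) + s *\<^sub>R X \<in> S"
      using in_ball_aux[of s t t X Y r p] that t S by (auto simp: algebra_simps)
    have m2: "p + s *\<^sub>R X \<in> S"
      using in_ball_aux[of s t 0 X Y r p] that t S by auto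
    show ?thesis unfolding k_def k'_def
      by (intro DERIV_diff line_deriv) (use d1 m1 m2 in auto)
  qed
  from MVT2[OF t(1) this] obtain s1 where s1: "0 < s1" "s1 < t" "k t - k 0 = (t - 0) * k' s1"
    by auto
  define m where "m u = pd g ((p + s1 *\<^sub>R X) + u *\<^sub>R Y) X" for u
  have "DERIV m u :> pd2 g ((p + s1 *\<^sub>R X) + u *\<^sub>R Y) Y X" if "0 \<le> u" "u \<le> t" for u
  proof -
    have m1: "(p + s1 *\<^sub>R X) + u *\<^sub>R Y \<in> S"
      using in_ball_aux[of s1 t u X Y r p] that t S s1 by (auto simp: algebra_simps)
    have "(\<lambda>q. pd g q X) differentiable (at ((p + s1 *\<^sub>R X) + u *\<^sub>R Y))"
      using d2 m1 by blast
    from line_deriv[OF this] show ?thesis unfolding m_def pd2_def .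
  qed
  from MVT2[OF t(1) this] obtain u1 where u1: "0 < u1" "u1 < t"
    "m t - m 0 = (t - 0) * pd2 g ((p + s1 *\<^sub>R X) + u1 *\<^sub>R Y) Y X"
    by auto
  have "k' s1 = m t - m 0" unfolding k'_def m_def by (simp add: algebra_simps)
  have q: "(p + s1 *\<^sub>R X) + u1 *\<^sub>R Y \<in> ball p r"
    using in_ball_aux[of s1 t u1 X Y r p] t s1 u1 by auto
  have "g (p + t *\<^sub>R X + t *\<^sub>R Y) - g (p + t *\<^sub>R X) - g (p + t *\<^sub>R Y) + g p = k t - k 0"
    unfolding k_def by (simp add: algebra_simps)
  also have "\<dots> = t\<^sup>2 * pd2 g ((p + s1 *\<^sub>R X) + u1 *\<^sub>R Y) Y X"
    using s1(3) u1(3) \<open>k' s1 = m t - m 0\<close> by (simp add: power2_eq_square)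
  finally show ?thesis using q by blast
qed

lemma pd2_sym:
  fixes g :: "R2 \<Rightarrow> real"
  assumes S: "open S" "p \<in> S"
    and d1: "\<forall>q\<in>S. g differentiable (at q)"
    and d2: "\<forall>Y. \<forall>q\<in>S. (\<lambda>q. pd g q Y) differentiable (at q)"
    and c: "\<forall>X Y. continuous_on S (\<lambda>q. pd2 g q X Y)"
  shows "pd2 g p X Y = pd2 g p Y X"
proof -
  let ?A = "pd2 g p Y X" and ?B = "pd2 g p X Y"
  have "\<bar>?A - ?B\<bar> \<le> 2 * e" if e: "e > 0" for e
  proof -
    have cA: "isCont (\<lambda>q. pd2 g q Y X) p" and cB: "isCont (\<lambda>q. pd2 g q X Y) p"
      using c S continuous_on_eq_continuous_at by blast+
    obtain dA where dA: "dA > 0" "\<forall>q. dist q p < dA \<longrightarrow> dist (pd2 g q Y X) ?A < e"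
      using cA e unfolding continuous_at_eps_delta by blast
    obtain dB where dB: "dB > 0" "\<forall>q. dist q p < dB \<longrightarrow> dist (pd2 g q X Y) ?B < e"
      using cB e unfolding continuous_at_eps_delta by blast
    obtain r0 where r0: "r0 > 0" "ball p r0 \<subseteq> S" using S open_contains_ball by blast
    define r where "r = min r0 (min dA dB)"
    have r: "r > 0" "ball p r \<subseteq> S" using r0 dA dB by (auto simp: r_def)
    define t where "t = r / (2 * (norm X + norm Y + 1))"
    have tpos: "t > 0" using r by (simp add: t_def add_nonneg_pos)
    have "t * (norm X + norm Y + 1) = r / 2"
    proof -
      have "norm X + norm Y + 1 > 0" by (simp add: add_nonneg_pos)
      then show ?thesis unfolding t_def by (simp add: field_simps)
    qed
    then have tl: "t * (norm X + norm Y) < r" using r tpos by (simp add: distrib_left)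
    have tl': "t * (norm Y + norm X) < r" using tl by (simp add: add.commute)
    obtain q1 where q1: "q1 \<in> ball p r"
      "g (p + t *\<^sub>R X + t *\<^sub>R Y) - g (p + t *\<^sub>R X) - g (p + t *\<^sub>R Y) + g p = t\<^sup>2 * pd2 g q1 Y X"
      using delta_lemma[OF r(2) tpos tl d1 d2] by blast
    obtain q2 where q2: "q2 \<in> ball p r"
      "g (p + t *\<^sub>R Y + t *\<^sub>R X) - g (p + t *\<^sub>R Y) - g (p + t *\<^sub>R X) + g p = t\<^sup>2 * pd2 g q2 X Y"
      using delta_lemma[OF r(2) tpos tl' d1 d2] by blast
    have "t\<^sup>2 * pd2 g q1 Y X = t\<^sup>2 * pd2 g q2 X Y"
      using q1(2) q2(2) by (simp add: algebra_simps)
    then have eq: "pd2 g q1 Y X = pd2 g q2 X Y" using tpos by simp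
    have "dist q1 p < dA" "dist q2 p < dB" using q1(1) q2(1) by (auto simp: r_def dist_commute)
    then have "dist (pd2 g q1 Y X) ?A < e" "dist (pd2 g q2 X Y) ?B < e"
      using dA(2) dB(2) by blast+
    then have "\<bar>pd2 g q1 Y X - ?A\<bar> < e" "\<bar>pd2 g q2 X Y - ?B\<bar> < e"
      unfolding dist_real_def by auto
    then show ?thesis using eq by linarith
  qed
  then have "\<bar>?A - ?B\<bar> \<le> 0 + e" if "e > 0" for e
    using that by (metis half_gt_zero add_0 mult_2 add_divide_distrib field_sum_of_halves)
  then have "\<bar>?A - ?B\<bar> \<le> 0" by (rule field_le_epsilon)
  then show ?thesis by simp
qed

lemma bl_diff: "bounded_linear L \<Longrightarrow> f differentiable F \<Longrightarrow> (\<lambda>q. L (f q)) differentiable F"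
  unfolding differentiable_def using bounded_linear.has_derivative by blast

lemma pd_lin:
  assumes "bounded_linear L" "f differentiable (at q)"
  shows "pd (\<lambda>q. L (f q)) q = (\<lambda>Y. L (pd f q Y))"
  using bounded_linear.has_derivative[OF assms(1) pd_works[OF assms(2)]]
  by (rule pd_unique)

lemma pd2_lin_der:
  assumes L: "bounded_linear L" and S: "open S" "p \<in> S"
    and d1: "\<forall>q\<in>S. f differentiable (at q)"
    and d2: "(\<lambda>q. pd f q Y) differentiable (at p)"
  shows "((\<lambda>q. pd (\<lambda>q. L (f q)) q Y) has_derivative (\<lambda>X. L (pd2 f p X Y))) (at p)"
proof -
  have "((\<lambda>q. L (pd f q Y)) has_derivative (\<lambda>X. L (pd2 f p X Y))) (at p)"
    using bounded_linear.has_derivative[OF L pd2_works[OF d2]] .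
  then show ?thesis
    by (rule has_derivative_transform_within_open[OF _ S]) (use pd_lin[OF L] d1 in auto)
qed

lemma pd2_lin:
  assumes L: "bounded_linear L" and S: "open S" "p \<in> S"
    and d1: "\<forall>q\<in>S. f differentiable (at q)"
    and d2: "(\<lambda>q. pd f q Y) differentiable (at p)"
  shows "pd2 (\<lambda>q. L (f q)) p X Y = L (pd2 f p X Y)"
    "(\<lambda>q. pd (\<lambda>q. L (f q)) q Y) differentiable (at p)"
  using pd_unique[OF pd2_lin_der[OF assms]] pd2_lin_der[OF assms]
  by (auto simp: pd2_def differentiable_def)

lemma C2_comp_sym:
  fixes \<psi> :: "R2 \<Rightarrow> 'b::real_normed_vector" and L :: "'b \<Rightarrow> real"
  assumes L: "bounded_linear L" and S: "open S" "p \<in> S" and C: "C2_on S \<psi>"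
  shows "L (pd2 \<psi> p X Y) = L (pd2 \<psi> p Y X)"
proof -
  let ?g = "\<lambda>q. L (\<psi> q)"
  from C have d1: "\<forall>q\<in>S. \<psi> differentiable (at q)"
    and d2: "\<forall>Y. \<forall>q\<in>S. (\<lambda>q. pd \<psi> q Y) differentiable (at q)"
    and c: "\<forall>X Y. continuous_on S (\<lambda>q. pd2 \<psi> q X Y)"
    unfolding C2_on_def by auto
  have g1: "\<forall>q\<in>S. ?g differentiable (at q)" using d1 bl_diff[OF L] by blast
  have g2: "\<forall>Y. \<forall>q\<in>S. (\<lambda>q. pd ?g q Y) differentiable (at q)"
    using pd2_lin(2)[OF L S(1) _ d1] d2 by blast
  have g3: "\<forall>X Y. continuous_on S (\<lambda>q. pd2 ?g q X Y)"
  proof (intro allI)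
    fix X Y
    have "continuous_on S (\<lambda>q. L (pd2 \<psi> q X Y))"
      by (rule continuous_on_compose2[OF linear_continuous_on[OF L] c[rule_format, of X Y]]) auto
    then show "continuous_on S (\<lambda>q. pd2 ?g q X Y)"
      by (rule continuous_on_cong[THEN iffD1, rotated 2]) (use pd2_lin(1)[OF L S(1) _ d1] d2 in auto)
  qed
  have "pd2 ?g p X Y = pd2 ?g p Y X" by (rule pd2_sym[OF S g1 g2 g3])
  then show ?thesis using pd2_lin(1)[OF L S d1] d2 S by simp
qed

lemma lin2: "linear f \<Longrightarrow> f T = fst T *\<^sub>R f e1 + snd T *\<^sub>R f e2"
proof -
  assume l: "linear f"
  have "T = fst T *\<^sub>R e1 + snd T *\<^sub>R e2" by (simp add: e1_def e2_def prod_eq_iff)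
  then have "f T = f (fst T *\<^sub>R e1 + snd T *\<^sub>R e2)" by simp
  also have "\<dots> = fst T *\<^sub>R f e1 + snd T *\<^sub>R f e2"
    using linear_add[OF l] linear_scale[OF l] by simp
  finally show ?thesis .
qed

lemma cramer:
  fixes a1 a2 b1 b2 V1 V2 D :: real
  assumes "D = a1*b2 - a2*b1" "D \<noteq> 0"
  shows "(V1*b2 - V2*b1)/D*a1 + (a1*V2-a2*V1)/D*b1 = V1 \<and> (V1*b2 - V2*b1)/D*a2 + (a1*V2-a2*V1)/D*b2 = V2"
proof -
  have "(V1*b2 - V2*b1)*a1 + (a1*V2-a2*V1)*b1 = V1 * D" "(V1*b2 - V2*b1)*a2 + (a1*V2-a2*V1)*b2 = V2*D"
    unfolding assms(1) by algebra+
  then show ?thesis using assms(2) by (simp add: field_simps)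
qed



lemma main_at:
  fixes S :: "(real \<times> real) set"
    and x n :: "real \<times> real \<Rightarrow> real \<times> real"
    and \<phi> :: "real \<times> real \<Rightarrow> real"
  assumes S: "open S" "p \<in> S"
    and C: "C2_on S (\<lambda>p. (x p, \<phi> p))"
    and det: "\<forall>q\<in>S. fst (pd x q e1) * snd (pd x q e2) - snd (pd x q e1) * fst (pd x q e2) \<noteq> 0"
    and con: "\<forall>q\<in>S. \<forall>X. n q \<bullet> pd x q X + pd \<phi> q X = 0"
  shows "n differentiable (at p)"
proof -
  let ?\<psi> = "\<lambda>p. (x p, \<phi> p)"
  from C have d1: "\<forall>q\<in>S. ?\<psi> differentiable (at q)"
    and d2: "\<forall>Y. \<forall>q\<in>S. (\<lambda>q. pd ?\<psi> q Y) differentiable (at q)"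
    unfolding C2_on_def by auto
  have dx: "(\<lambda>q. pd x q Y) differentiable (at p)" for Y
    using pd2_lin(2)[OF bounded_linear_fst S d1, of Y] d2 S by simp
  have dphi: "(\<lambda>q. pd \<phi> q Y) differentiable (at p)" for Y
    using pd2_lin(2)[OF bounded_linear_snd S d1, of Y] d2 S by simp
  define a1 where "a1 q = fst (pd x q e1)" for q
  define a2 where "a2 q = snd (pd x q e1)" for q
  define b1 where "b1 q = fst (pd x q e2)" for q
  define b2 where "b2 q = snd (pd x q e2)" for q
  define c where "c q = pd \<phi> q e1" for q
  define d where "d q = pd \<phi> q e2" for q
  define F where "F q = ((d q * a2 q - c q * b2 q) / (a1 q * b2 q - a2 q * b1 q),
                         (b1 q * c q - a1 q * d q) / (a1 q * b2 q - a2 q * b1 q))" for q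
  have "F differentiable (at p)"
    unfolding F_def a1_def a2_def b1_def b2_def c_def d_def
    using det S(2) dx dphi
    by (intro derivative_intros bl_diff[OF bounded_linear_fst] bl_diff[OF bounded_linear_snd]) auto
  moreover have "F q = n q" if q: "q \<in> S" for q
  proof -
    have e1: "fst (n q) * a1 q + snd (n q) * a2 q = - c q"
      using con[rule_format, OF q, of e1] unfolding a1_def a2_def c_def by (simp add: inner_prod_def)
    have e2: "fst (n q) * b1 q + snd (n q) * b2 q = - d q"
      using con[rule_format, OF q, of e2] unfolding b1_def b2_def d_def by (simp add: inner_prod_def)
    have dz: "a1 q * b2 q - a2 q * b1 q \<noteq> 0" using det q unfolding a1_def a2_def b1_def b2_def by auto
    have "fst (n q) * (a1 q * b2 q - a2 q * b1 q) = d q * a2 q - c q * b2 q"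
      using e1 e2 by algebra
    moreover have "snd (n q) * (a1 q * b2 q - a2 q * b1 q) = b1 q * c q - a1 q * d q"
      using e1 e2 by algebra
    ultimately show ?thesis using dz unfolding F_def by (simp add: prod_eq_iff field_simps)
  qed
  ultimately show ?thesis
    unfolding differentiable_def using has_derivative_transform_within_open[OF _ S] by blast
qed

lemma main_at2:
  fixes S :: "(real \<times> real) set"
    and x n :: "real \<times> real \<Rightarrow> real \<times> real"
    and \<phi> :: "real \<times> real \<Rightarrow> real"
  assumes S: "open S" "p \<in> S"
    and C: "C2_on S (\<lambda>p. (x p, \<phi> p))"
    and det: "\<forall>q\<in>S. fst (pd x q e1) * snd (pd x q e2) - snd (pd x q e1) * fst (pd x q e2) \<noteq> 0"
    and con: "\<forall>q\<in>S. \<forall>X. n q \<bullet> pd x q X + pd \<phi> q X = 0"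
    and bl: "(det3 (pd (\<lambda>p. (x p, \<phi> p)) p e1) (pd (\<lambda>p. (x p, \<phi> p)) p e2) ((0,0),1))\<^sup>2
             = \<bar>det_h (\<lambda>p. (x p, \<phi> p)) (\<lambda>p. ((0,0),1)) p\<bar>"
    and neg: "det_h (\<lambda>p. (x p, \<phi> p)) (\<lambda>p. ((0,0),1)) p < 0"
  shows "pullback2 omega1 (L_tilde x n) p X Y = 0 \<and> pullback2 omega2 (L_tilde x n) p X Y = 0"
proof -
  let ?\<psi> = "\<lambda>p. (x p, \<phi> p)"
  from C have d1: "\<forall>q\<in>S. ?\<psi> differentiable (at q)"
    and d2: "\<forall>Y. \<forall>q\<in>S. (\<lambda>q. pd ?\<psi> q Y) differentiable (at q)"
    unfolding C2_on_def by auto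
  have dx: "(\<lambda>q. pd x q Y) differentiable (at p)" for Y
    using pd2_lin(2)[OF bounded_linear_fst S d1, of Y] d2 S by simp
  have dphi: "(\<lambda>q. pd \<phi> q Y) differentiable (at p)" for Y
    using pd2_lin(2)[OF bounded_linear_snd S d1, of Y] d2 S by simp
  have xd: "x differentiable (at q)" if "q \<in> S" for q
    using bl_diff[OF bounded_linear_fst, of ?\<psi>] d1 that by simp
  have pdpsi: "pd ?\<psi> q Y = (pd x q Y, pd \<phi> q Y)" if "q \<in> S" for q Y
    using pd_lin[OF bounded_linear_fst, of ?\<psi> q] pd_lin[OF bounded_linear_snd, of ?\<psi> q] d1 that
    by (simp add: prod_eq_iff)
  have pd2psi: "pd2 ?\<psi> p X Y = (pd2 x p X Y, pd2 \<phi> p X Y)" for X Y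
    using pd2_lin(1)[OF bounded_linear_fst S d1, of Y X] pd2_lin(1)[OF bounded_linear_snd S d1, of Y X] d2 S
    by (simp add: prod_eq_iff)
  have blff: "bounded_linear (\<lambda>v::R3. fst (fst v))" "bounded_linear (\<lambda>v::R3. snd (fst v))"
    "bounded_linear (\<lambda>v::R3. snd v)"
    by (auto intro!: bounded_linear_intros)
  have symx: "pd2 x p X Y = pd2 x p Y X" for X Y
    using C2_comp_sym[OF blff(1) S C, of X Y] C2_comp_sym[OF blff(2) S C, of X Y] pd2psi
    by (simp add: prod_eq_iff)
  have symphi: "pd2 \<phi> p X Y = pd2 \<phi> p Y X" for X Y
    using C2_comp_sym[OF blff(3) S C, of X Y] pd2psi by simp
  have nd: "n differentiable (at p)" by (rule main_at[OF S C det con])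
  have ident: "pd n p X \<bullet> pd x p Y + n p \<bullet> pd2 x p X Y + pd2 \<phi> p X Y = 0" for X Y
  proof -
    let ?G = "\<lambda>q. n q \<bullet> pd x q Y + pd \<phi> q Y"
    have g1: "(?G has_derivative (\<lambda>h. (n p \<bullet> pd2 x p h Y + pd n p h \<bullet> pd x p Y) + pd2 \<phi> p h Y)) (at p)"
      by (intro has_derivative_add has_derivative_inner pd_works nd pd2_works dx dphi)
    have "((\<lambda>q. 0::real) has_derivative (\<lambda>h. 0)) (at p)" by simp
    then have g0: "(?G has_derivative (\<lambda>h. 0)) (at p)"
      by (rule has_derivative_transform_within_open[OF _ S]) (simp add: con[rule_format])
    have "(\<lambda>h. (n p \<bullet> pd2 x p h Y + pd n p h \<bullet> pd x p Y) + pd2 \<phi> p h Y) = (\<lambda>h. 0)"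
      using has_derivative_unique[OF g1 g0] .
    then have "(n p \<bullet> pd2 x p X Y + pd n p X \<bullet> pd x p Y) + pd2 \<phi> p X Y = 0" by meson
    then show ?thesis by (simp add: algebra_simps)
  qed
  define H where "H X Y = pd2 \<phi> p X Y + n p \<bullet> pd2 x p X Y" for X Y
  have HD: "H X Y = - (pd n p X \<bullet> pd x p Y)" for X Y
    using ident[of X Y] unfolding H_def by linarith
  have Hsym: "H X Y = H Y X" for X Y unfolding H_def using symx symphi by simp
  have linx: "linear (pd x p)" using pd_linear[OF xd[OF S(2)]] .
  have linn: "linear (pd n p)" using pd_linear[OF nd] .
  define a where "a = pd x p e1"
  define b where "b = pd x p e2"
  define u where "u = pd n p e1"
  define v where "v = pd n p e2"
  define \<Delta>x where "\<Delta>x = fst a * snd b - snd a * fst b"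
  define \<Delta>n where "\<Delta>n = fst u * snd v - snd u * fst v"
  have dxz: "\<Delta>x \<noteq> 0" using det S(2) unfolding \<Delta>x_def a_def b_def by auto
  have aff: "affine_fundamental_form ?\<psi> (\<lambda>p. ((0,0),1)) p X Y = H X Y" for X Y
    unfolding affine_fundamental_form_def
  proof (rule the_equality)
    define V where "V = pd2 x p X Y"
    define T where "T = ((fst V * snd b - snd V * fst b) / \<Delta>x, (fst a * snd V - snd a * fst V) / \<Delta>x)"
    have "pd x p T = fst T *\<^sub>R a + snd T *\<^sub>R b" using lin2[OF linx] unfolding a_def b_def .
    also have "\<dots> = V"
      using cramer[OF \<Delta>x_def dxz, of "fst V" "snd V"] unfolding T_def
      by (simp add: prod_eq_iff)
    finally have DT: "pd x p T = V" .
    have "pd2 \<phi> p X Y = pd \<phi> p T + H X Y"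
      using con[rule_format, OF S(2), of T] DT unfolding H_def V_def by simp
    then show "\<exists>T. pd2 ?\<psi> p X Y = pd ?\<psi> p T + H X Y *\<^sub>R ((0,0),1)"
      using DT pdpsi[OF S(2)] pd2psi unfolding V_def
      by (intro exI[of _ T]) (simp add: prod_eq_iff)
  next
    fix h assume "\<exists>T. pd2 ?\<psi> p X Y = pd ?\<psi> p T + h *\<^sub>R ((0,0),1)"
    then obtain T where "pd2 ?\<psi> p X Y = pd ?\<psi> p T + h *\<^sub>R ((0,0),1)" by blast
    then have "pd2 x p X Y = pd x p T" "pd2 \<phi> p X Y = pd \<phi> p T + h"
      using pdpsi[OF S(2)] pd2psi by (simp_all add: prod_eq_iff)
    then show "h = H X Y"
      using con[rule_format, OF S(2), of T] unfolding H_def by simp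
  qed
  have "det_h ?\<psi> (\<lambda>p. ((0,0),1)) p = H e1 e1 * H e2 e2 - H e1 e2 * H e2 e1"
    unfolding det_h_def Let_def aff ..
  also have "\<dots> = \<Delta>n * \<Delta>x"
    unfolding HD \<Delta>n_def \<Delta>x_def a_def b_def u_def v_def
    by (simp add: inner_prod_def algebra_simps)
  finally have dh: "det_h ?\<psi> (\<lambda>p. ((0,0),1)) p = \<Delta>n * \<Delta>x" .
  have d3: "det3 (pd ?\<psi> p e1) (pd ?\<psi> p e2) ((0,0),1) = \<Delta>x"
    unfolding det3_def Let_def pdpsi[OF S(2)] \<Delta>x_def a_def b_def by simp
  have "\<Delta>x * \<Delta>x = - (\<Delta>n * \<Delta>x)" using bl neg unfolding dh d3 by (simp add: power2_eq_square)
  then have "\<Delta>x * (\<Delta>x + \<Delta>n) = 0" by (simp add: algebra_simps)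
  then have sum0: "\<Delta>x + \<Delta>n = 0" using dxz by simp
  have pdL: "pd (L_tilde x n) p Z = ((fst (pd x p Z), fst (pd n p Z)), (snd (pd x p Z), snd (pd n p Z)))" for Z
  proof -
    have eq: "L_tilde x n = (\<lambda>q. ((fst (x q), fst (n q)), (snd (x q), snd (n q))))"
      by (rule ext) (simp add: L_tilde_def pc_def)
    have der: "((\<lambda>q. ((fst (x q), fst (n q)), (snd (x q), snd (n q)))) has_derivative
        (\<lambda>Z. ((fst (pd x p Z), fst (pd n p Z)), (snd (pd x p Z), snd (pd n p Z))))) (at p)"
      by (intro has_derivative_Pair has_derivative_fst has_derivative_snd pd_works nd xd S(2))
    have "pd (L_tilde x n) p = (\<lambda>Z. ((fst (pd x p Z), fst (pd n p Z)), (snd (pd x p Z), snd (pd n p Z))))"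
      unfolding eq by (rule pd_unique[OF der])
    then show ?thesis by simp
  qed
  have o1: "pullback2 omega1 (L_tilde x n) p X Y = pd n p Y \<bullet> pd x p X - pd n p X \<bullet> pd x p Y"
    unfolding pullback2_def omega1_def dwedge_def ycoord_def pdL
    by (simp add: inner_prod_def algebra_simps)
  also have "\<dots> = 0" using HD[of X Y] HD[of Y X] Hsym[of X Y] by simp
  finally have r1: "pullback2 omega1 (L_tilde x n) p X Y = 0" .
  have exX: "pd x p Z = fst Z *\<^sub>R a + snd Z *\<^sub>R b" for Z using lin2[OF linx] unfolding a_def b_def .
  have exN: "pd n p Z = fst Z *\<^sub>R u + snd Z *\<^sub>R v" for Z using lin2[OF linn] unfolding u_def v_def .
  have "pullback2 omega2 (L_tilde x n) p X Y = (fst X * snd Y - snd X * fst Y) * (\<Delta>x + \<Delta>n)"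
    unfolding pullback2_def omega2_def dwedge_def ycoord_def pdL exX exN \<Delta>x_def \<Delta>n_def
    by (simp add: algebra_simps)
  also have "\<dots> = 0" using sum0 by simp
  finally show ?thesis using r1 by simp
qed

theorem mainTheorem2:
  fixes S :: "(real \<times> real) set"
    and x n :: "real \<times> real \<Rightarrow> real \<times> real"
    and \<phi> :: "real \<times> real \<Rightarrow> real"
  assumes "open S"
    and "improper_affine_sphere S (\<lambda>p. (x p, \<phi> p)) (\<lambda>p. ((0, 0), 1))"
    and "indefinite_affine_metric S (\<lambda>p. (x p, \<phi> p)) (\<lambda>p. ((0, 0), 1))"
    and "is_conormal S (\<lambda>p. (x p, \<phi> p)) (\<lambda>p. ((0, 0), 1)) (\<lambda>p. (n p, 1))"
  shows "(\<forall>p\<in>S. \<forall>X Y. pullback2 omega1 (L_tilde x n) p X Y = 0) \<and>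
         (\<forall>p\<in>S. \<forall>X Y. pullback2 omega2 (L_tilde x n) p X Y = 0)"
proof -
  let ?\<psi> = "\<lambda>p. (x p, \<phi> p)"
  have C: "C2_on S ?\<psi>" using assms(2) unfolding improper_affine_sphere_def immersion_on_def by blast
  have B: "is_blaschke_normal S ?\<psi> (\<lambda>p. ((0, 0), 1))"
    using assms(2) unfolding improper_affine_sphere_def by blast
  from C have d1: "\<forall>q\<in>S. ?\<psi> differentiable (at q)" unfolding C2_on_def by auto
  have pdpsi: "pd ?\<psi> q Y = (pd x q Y, pd \<phi> q Y)" if "q \<in> S" for q Y
    using pd_lin[OF bounded_linear_fst, of ?\<psi> q] pd_lin[OF bounded_linear_snd, of ?\<psi> q] d1 that
    by (simp add: prod_eq_iff)
  have det: "\<forall>q\<in>S. fst (pd x q e1) * snd (pd x q e2) - snd (pd x q e1) * fst (pd x q e2) \<noteq> 0"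
  proof
    fix q assume q: "q \<in> S"
    then have "det3 (pd ?\<psi> q e1) (pd ?\<psi> q e2) ((0,0),1) \<noteq> 0"
      using B unfolding is_blaschke_normal_def by blast
    then show "fst (pd x q e1) * snd (pd x q e2) - snd (pd x q e1) * fst (pd x q e2) \<noteq> 0"
      unfolding det3_def Let_def pdpsi[OF q] by simp
  qed
  have con: "\<forall>q\<in>S. \<forall>X. n q \<bullet> pd x q X + pd \<phi> q X = 0"
  proof (intro ballI allI)
    fix q X assume q: "q \<in> S"
    then have "(n q, 1) \<bullet> pd ?\<psi> q X = 0"
      using assms(4) unfolding is_conormal_def by blast
    then show "n q \<bullet> pd x q X + pd \<phi> q X = 0"
      unfolding pdpsi[OF q] by (simp add: inner_prod_def)
  qed
  have *: "pullback2 omega1 (L_tilde x n) p X Y = 0 \<and> pullback2 omega2 (L_tilde x n) p X Y = 0"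
    if p: "p \<in> S" for p X Y
  proof (rule main_at2[OF assms(1) p C det con])
    show "(det3 (pd ?\<psi> p e1) (pd ?\<psi> p e2) ((0,0),1))\<^sup>2 = \<bar>det_h ?\<psi> (\<lambda>p. ((0,0),1)) p\<bar>"
      using B p unfolding is_blaschke_normal_def by blast
    show "det_h ?\<psi> (\<lambda>p. ((0,0),1)) p < 0"
      using assms(3) p unfolding indefinite_affine_metric_def by blast
  qed
  show ?thesis using * by blast
qed

end
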